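(* Let $X^{(n)}=\{X_1,\dots,X_n\}\subset\mathbb{R}^d$ and $u^{(n)}=\{u_1,\dots,u_n\}\subset\mathbb{R}^d$. Fix $i\in\{1,\dots,n\}$ and $\ell\in\{1,\dots,n\}$, let $v_{u_i}\in\arg\min_{v\in\mathcal{S}^{d-1}}\frac1n\sum_{j=1}^n\mathbf{1}(\langle v,u_j-u_i\rangle\geq0)$, and for $k\in\mathbb{N}$ let $X_k^{(n,\ell)}=\{X_1,\dots,X_{n-\ell},v_1^{(k)},\dots,v_\ell^{(k)}\}$ with $\{v_1^{(k)},\dots,v_\ell^{(k)}\}\subset kv_{u_i}+\mathbb{B}$. If $\mathrm{TD}(u_i;u^{(n)})<\ell/n$, then $$\lim_{k\to\infty}\|\hat T_{X_k^{(n,\ell)}}(u_i)\|=\infty.$$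
   Context: $\mathbb{B}=\{x:\|x\|\leq1\}$. For a set $Z^{(n)}$ of $n$ points, $\hat T_{Z^{(n)}}$ denotes any bijection $T:u^{(n)}\to Z^{(n)}$ minimizing $\frac1n\sum_{j}\|T(u_j)-u_j\|^2$. $\mathrm{TD}(u;u^{(n)})=\min_{v\in\mathcal{S}^{d-1}}\frac1n\sum_j\mathbf{1}(\langle v,u_j-u\rangle\geq0)$. *)

theory Defs
  imports "HOL-Analysis.Analysis" "HOL-Combinatorics.Permutations"
begin

text \<open>Point clouds of n points are indexed families on {..<n} (0-based indices).\<close>

definition tukey_frac :: "nat \<Rightarrow> (nat \<Rightarrow> 'a::euclidean_space) \<Rightarrow> 'a \<Rightarrow> 'a \<Rightarrow> real" where
  "tukey_frac n us u v = real (card {j\<in>{..<n}. v \<bullet> (us j - u) \<ge> 0}) / real n"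

definition tukey_depth :: "nat \<Rightarrow> (nat \<Rightarrow> 'a::euclidean_space) \<Rightarrow> 'a \<Rightarrow> real" where
  "tukey_depth n us u = Inf (tukey_frac n us u ` sphere 0 1)"

definition assign_cost :: "nat \<Rightarrow> (nat \<Rightarrow> 'a::euclidean_space) \<Rightarrow> (nat \<Rightarrow> 'a) \<Rightarrow> (nat \<Rightarrow> nat) \<Rightarrow> real" where
  "assign_cost n us Z \<sigma> = (\<Sum>j<n. (norm (Z (\<sigma> j) - us j))\<^sup>2) / real n"

text \<open>sigma encodes an optimal bijection T : u^(n) \<rightarrow> Z^(n), T(u_j) = Z_{sigma j}.\<close>
definition optimal_assignment :: "nat \<Rightarrow> (nat \<Rightarrow> 'a::euclidean_space) \<Rightarrow> (nat \<Rightarrow> 'a) \<Rightarrow> (nat \<Rightarrow> nat) \<Rightarrow> bool" where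
  "optimal_assignment n us Z \<sigma> \<longleftrightarrow> \<sigma> permutes {..<n} \<and>
     (\<forall>\<tau>. \<tau> permutes {..<n} \<longrightarrow> assign_cost n us Z \<sigma> \<le> assign_cost n us Z \<tau>)"

end

theory Submission
  imports Defs
begin

lemma swap_ineq_aux:
  fixes A B p q :: "'a::real_inner"
  assumes "(norm (A - p))\<^sup>2 + (norm (B - q))\<^sup>2 \<le> (norm (A - q))\<^sup>2 + (norm (B - p))\<^sup>2"
  shows "B \<bullet> (p - q) \<le> A \<bullet> (p - q)"
  using assms by (simp add: power2_norm_eq_inner inner_diff_left inner_diff_right inner_commute algebra_simps)

lemma swap_cost:
  fixes us Z :: "nat \<Rightarrow> 'a::euclidean_space"
  assumes opt: "optimal_assignment n us Z s" and i: "i < n" and j: "j < n" and ij: "i \<noteq> j"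
  shows "(norm (Z (s i) - us i))\<^sup>2 + (norm (Z (s j) - us j))\<^sup>2
     \<le> (norm (Z (s j) - us i))\<^sup>2 + (norm (Z (s i) - us j))\<^sup>2"
proof -
  have sp: "s permutes {..<n}" using opt by (simp add: optimal_assignment_def)
  define t where "t = s \<circ> Transposition.transpose i j"
  have tp: "t permutes {..<n}" unfolding t_def
    by (rule permutes_compose[OF permutes_swap_id sp]) (use i j in auto)
  have le: "assign_cost n us Z s \<le> assign_cost n us Z t" using opt tp by (simp add: optimal_assignment_def)
  have np: "real n > 0" using i by simp
  define f where "f = (\<lambda>x. (norm (Z (s x) - us x))\<^sup>2)"
  define g where "g = (\<lambda>x. (norm (Z (t x) - us x))\<^sup>2)"
  have le2: "sum f {..<n} \<le> sum g {..<n}"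
    using le np unfolding assign_cost_def f_def g_def by (simp add: divide_right_mono_neg divide_le_cancel)
  have split: "sum h {..<n} = h i + h j + sum h ({..<n} - {i, j})" for h :: "nat \<Rightarrow> real"
  proof -
    have "sum h {..<n} = h i + sum h ({..<n} - {i})" using i by (simp add: sum.remove)
    also have "sum h ({..<n} - {i}) = h j + sum h ({..<n} - {i} - {j})" using j ij by (subst sum.remove) auto
    also have "{..<n} - {i} - {j} = {..<n} - {i, j}" by auto
    finally show ?thesis by simp
  qed
  have rest: "sum f ({..<n} - {i, j}) = sum g ({..<n} - {i, j})"
    by (rule sum.cong) (auto simp: f_def g_def t_def Transposition.transpose_def)
  have "f i + f j \<le> g i + g j" using le2 split[of f] split[of g] rest by linarith
  moreover have "g i = (norm (Z (s j) - us i))\<^sup>2" "g j = (norm (Z (s i) - us j))\<^sup>2"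
    by (auto simp: g_def t_def Transposition.transpose_def)
  ultimately show ?thesis by (simp add: f_def)
qed

theorem mainTheorem9:
  fixes n l i :: nat and X u :: "nat \<Rightarrow> 'a::euclidean_space"
    and v :: 'a and V :: "nat \<Rightarrow> nat \<Rightarrow> 'a" and Z :: "nat \<Rightarrow> nat \<Rightarrow> 'a"
    and \<sigma> :: "nat \<Rightarrow> nat \<Rightarrow> nat"
  assumes X_inj: "inj_on X {..<n}"
    and u_inj: "inj_on u {..<n}"
    and i: "i < n"
    and l: "1 \<le> l" "l \<le> n"
    and v_sphere: "v \<in> sphere 0 1"
    and v_argmin: "\<forall>w\<in>sphere 0 1. tukey_frac n u (u i) v \<le> tukey_frac n u (u i) w"
    and V_ball: "\<forall>k j. j < l \<longrightarrow> V k j \<in> cball (real k *\<^sub>R v) 1"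
    and Z_def: "\<forall>k j. Z k j = (if j < n - l then X j else V k (j - (n - l)))"
    and Z_inj: "\<forall>k. inj_on (Z k) {..<n}"
    and \<sigma>_opt: "\<forall>k. optimal_assignment n u (Z k) (\<sigma> k)"
    and TD: "tukey_depth n u (u i) < real l / real n"
  shows "filterlim (\<lambda>k. norm (Z k (\<sigma> k i))) at_top sequentially"
proof -
  define A where "A = {j\<in>{..<n}. v \<bullet> (u j - u i) \<ge> 0}"
  have np: "real n > 0" using i by simp
  have "tukey_frac n u (u i) v \<le> tukey_depth n u (u i)"
    unfolding tukey_depth_def using v_argmin v_sphere by (intro cInf_greatest) auto
  hence "real (card A) / real n < real l / real n" using TD unfolding tukey_frac_def A_def by simp
  hence cardA: "card A < l" using np by (simp add: divide_less_cancel)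
  define P where "P = {(a, j). a < n - l \<and> j < n \<and> v \<bullet> (u i - u j) > 0}"
  have finP: "finite P"
    by (rule finite_subset[of _ "{..<n} \<times> {..<n}"]) (auto simp: P_def)
  have ev_one: "eventually (\<lambda>k. real k * (v \<bullet> (u i - u j)) > norm (X a) * norm (u i - u j) + norm (u i - u j)) sequentially"
    if "(a, j) \<in> P" for a j
  proof -
    have d: "v \<bullet> (u i - u j) > 0" using that by (simp add: P_def)
    obtain N :: nat where N: "(norm (X a) * norm (u i - u j) + norm (u i - u j)) / (v \<bullet> (u i - u j)) < real N"
      using reals_Archimedean2 by blast
    show ?thesis
    proof (rule eventually_sequentiallyI[of N])
      fix k assume "N \<le> k"
      hence "(norm (X a) * norm (u i - u j) + norm (u i - u j)) / (v \<bullet> (u i - u j)) < real k" using N by linarith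
      thus "real k * (v \<bullet> (u i - u j)) > norm (X a) * norm (u i - u j) + norm (u i - u j)"
        using d by (simp add: pos_divide_less_eq)
    qed
  qed
  have ev: "eventually (\<lambda>k. \<forall>(a, j)\<in>P. real k * (v \<bullet> (u i - u j)) > norm (X a) * norm (u i - u j) + norm (u i - u j)) sequentially"
    using eventually_ball_finite[OF finP, of "\<lambda>k (a,j). real k * (v \<bullet> (u i - u j)) > norm (X a) * norm (u i - u j) + norm (u i - u j)"] ev_one
    by (auto simp: case_prod_beta)
  have far: "\<sigma> k i \<ge> n - l" if H: "\<forall>(a, j)\<in>P. real k * (v \<bullet> (u i - u j)) > norm (X a) * norm (u i - u j) + norm (u i - u j)" for k
  proof (rule ccontr)
    assume "\<not> \<sigma> k i \<ge> n - l"
    hence a: "\<sigma> k i < n - l" by simp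
    have sp: "\<sigma> k permutes {..<n}" using \<sigma>_opt by (simp add: optimal_assignment_def)
    define J where "J = {j\<in>{..<n}. \<sigma> k j \<ge> n - l}"
    have bij: "bij_betw (\<sigma> k) {..<n} {..<n}" using sp by (rule permutes_imp_bij)
    have img: "\<sigma> k ` J = {n-l..<n}"
    proof
      show "\<sigma> k ` J \<subseteq> {n-l..<n}"
      proof
        fix y assume "y \<in> \<sigma> k ` J"
        then obtain x where x: "x < n" "\<sigma> k x \<ge> n - l" "y = \<sigma> k x" by (auto simp: J_def)
        have "\<sigma> k x < n" using permutes_in_image[OF sp, of x] x(1) by simp
        thus "y \<in> {n-l..<n}" using x by simp
      qed
      show "{n-l..<n} \<subseteq> \<sigma> k ` J"
      proof
        fix y assume y: "y \<in> {n-l..<n}"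
        hence "y \<in> \<sigma> k ` {..<n}" using bij_betw_imp_surj_on[OF bij] by simp
        then obtain x where "x < n" "\<sigma> k x = y" by auto
        thus "y \<in> \<sigma> k ` J" using y unfolding J_def by force
      qed
    qed
    have injJ: "inj_on (\<sigma> k) J" using bij_betw_imp_inj_on[OF bij] by (rule inj_on_subset) (auto simp: J_def)
    have "card J = card {n-l..<n}" using card_image[OF injJ] img by simp
    hence cJ: "card J = l" using l by simp
    have "\<not> J \<subseteq> A"
    proof
      assume "J \<subseteq> A"
      hence "card J \<le> card A" by (intro card_mono) (auto simp: A_def)
      thus False using cJ cardA by simp
    qed
    then obtain j where jJ: "j \<in> J" and jA: "j \<notin> A" by blast
    have j: "j < n" "\<sigma> k j \<ge> n - l" "\<sigma> k j < n" using jJ permutes_in_image[OF sp, of j] by (auto simp: J_def)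
    have dj: "v \<bullet> (u i - u j) > 0" using jA j by (auto simp: A_def inner_diff_right)
    have "i \<in> A" using i by (simp add: A_def)
    hence ij: "i \<noteq> j" using jA by auto
    note key = swap_cost[OF \<sigma>_opt[rule_format, of k] i j(1) ij]
    have "Z k (\<sigma> k j) \<bullet> (u i - u j) \<le> Z k (\<sigma> k i) \<bullet> (u i - u j)"
      by (rule swap_ineq_aux) (use key in \<open>simp add: add.commute\<close>)
    moreover have "Z k (\<sigma> k i) = X (\<sigma> k i)" using Z_def a by simp
    moreover define e where "e = Z k (\<sigma> k j) - real k *\<^sub>R v"
    moreover have "norm e \<le> 1"
    proof -
      have "\<sigma> k j - (n - l) < l" using j l by simp
      hence "V k (\<sigma> k j - (n - l)) \<in> cball (real k *\<^sub>R v) 1" using V_ball by blast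
      thus ?thesis using Z_def j by (simp add: e_def dist_norm norm_minus_commute)
    qed
    ultimately have "real k * (v \<bullet> (u i - u j)) + e \<bullet> (u i - u j) \<le> X (\<sigma> k i) \<bullet> (u i - u j)"
      by (simp add: inner_add_left e_def algebra_simps)
    moreover have "- norm (u i - u j) \<le> e \<bullet> (u i - u j)"
    proof -
      have "\<bar>e \<bullet> (u i - u j)\<bar> \<le> norm e * norm (u i - u j)" by (rule Cauchy_Schwarz_ineq2)
      also have "\<dots> \<le> norm (u i - u j)" using \<open>norm e \<le> 1\<close> by (simp add: mult_left_le_one_le)
      finally show ?thesis by linarith
    qed
    moreover have "X (\<sigma> k i) \<bullet> (u i - u j) \<le> norm (X (\<sigma> k i)) * norm (u i - u j)"
      by (rule norm_cauchy_schwarz)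
    moreover have "(\<sigma> k i, j) \<in> P" using a j dj by (simp add: P_def)
    hence "real k * (v \<bullet> (u i - u j)) > norm (X (\<sigma> k i)) * norm (u i - u j) + norm (u i - u j)"
      using H by blast
    ultimately show False by linarith
  qed
  have lower: "eventually (\<lambda>k. real k - 1 \<le> norm (Z k (\<sigma> k i))) sequentially"
    using ev
  proof eventually_elim
    case (elim k)
    have f: "\<sigma> k i \<ge> n - l" using far elim by blast
    have sp: "\<sigma> k permutes {..<n}" using \<sigma>_opt by (simp add: optimal_assignment_def)
    have "\<sigma> k i < n" using permutes_in_image[OF sp, of i] i by simp
    hence "\<sigma> k i - (n - l) < l" using f l by simp
    hence "V k (\<sigma> k i - (n - l)) \<in> cball (real k *\<^sub>R v) 1" using V_ball by blast
    hence d: "norm (real k *\<^sub>R v - Z k (\<sigma> k i)) \<le> 1" using Z_def f by (simp add: dist_norm)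
    have "norm (real k *\<^sub>R v) = real k" using v_sphere by simp
    moreover have "norm (real k *\<^sub>R v) \<le> norm (Z k (\<sigma> k i)) + norm (real k *\<^sub>R v - Z k (\<sigma> k i))"
      by (metis norm_triangle_sub add.commute)
    ultimately show ?case using d by linarith
  qed
  have "filterlim (\<lambda>k. (-1) + real k) at_top sequentially"
    by (rule filterlim_tendsto_add_at_top[OF tendsto_const filterlim_real_sequentially])
  hence "filterlim (\<lambda>k. real k - 1) at_top sequentially" by simp
  thus ?thesis using lower by (rule filterlim_at_top_mono)
qed

end
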